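(* Let $X$ be a non-empty finite set and $\mathcal{P}=\{P_1,\ldots,P_n\}$ a partition of $X$ indexed so that $|P_i|\le|P_{i+1}|$, with distinct block sizes $l_1<\cdots<l_r$. If $f\in\Sigma(X,\mathcal{P})$, then there exists a companion of $\overline{f}$ in the subsemigroup generated by $S(X,\mathcal{P})\cup\mathcal{B}$.
   Context: Maps are written on the right and composed left to right. $T(X,\mathcal{P})$ is the semigroup of maps $f:X\to X$ mapping each block of $\mathcal{P}$ into some block; $S(X,\mathcal{P})$ is its group of units; $\Sigma(X,\mathcal{P})$ is the set of $f\in T(X,\mathcal{P})$ whose image intersects every block. For $f\in T(X,\mathcal{P})$, $\overline{f}$ is the map on $\{1,\ldots,n\}$ with $(i)\overline{f}=j$ whenever $P_if\subseteq P_j$ (for $f\in\Sigma(X,\mathcal{P})$ this is a permutation). For $i\le r-1$, $\mathcal{B}_i$ is the set of $f\in\Sigma(X,\mathcal{P})$ for which there are blocks $P_j,P_{j'},P_k,P_{k'}$ (possibly $j=j'$ or $k=k'$) with $|P_j|=|P_{j'}|=l_i$, $|P_k|=|P_{k'}|=l_{i+1}$, such that $f$ maps $P_j$ injectively into $P_k$, maps $P_{k'}$ onto $P_{j'}$, and maps every other block bijectively onto a block of the same size; $\mathcal{B}=\bigcup_{i=1}^{r-1}\mathcal{B}_i$. For a permutation $\pi$ of $\{1,\ldots,n\}$, a companion of $\pi$ is a $g\in\Sigma(X,\mathcal{P})$ with $\overline{g}=\pi$ such that $g|_{P_i}:P_i\to P_{(i)\pi}$ is injective whenever $|P_i|\le|P_{(i)\pi}|$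 and surjective whenever $|P_i|\ge|P_{(i)\pi}|$. *)

theory Defs
  imports Main
begin

text \<open>Maps X \<Rightarrow> X are represented as functions 'a \<Rightarrow> 'a that are the identity
outside X.
Composition is written right-to-left (g \<circ> f); since the generated
subsemigroup is closed under composition in both orders, this does not affect it.\<close>

definition Tpart :: "'a set \<Rightarrow> nat \<Rightarrow> (nat \<Rightarrow> 'a set) \<Rightarrow> ('a \<Rightarrow> 'a) set" where
  "Tpart X n P = {f. (\<forall>x\<in>X. f x \<in> X) \<and> (\<forall>x. x \<notin> X \<longrightarrow> f x = x) \<and>
                     (\<forall>i\<in>{1..n}. \<exists>j\<in>{1..n}. f ` P i \<subseteq> P j)}"

definition Spart :: "'a set \<Rightarrow> nat \<Rightarrow> (nat \<Rightarrow> 'a set) \<Rightarrow> ('a \<Rightarrow> 'a) set" where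
  "Spart X n P = {f \<in> Tpart X n P. \<exists>g \<in> Tpart X n P. g \<circ> f = id \<and> f \<circ> g = id}"

definition Sigmapart :: "'a set \<Rightarrow> nat \<Rightarrow> (nat \<Rightarrow> 'a set) \<Rightarrow> ('a \<Rightarrow> 'a) set" where
  "Sigmapart X n P = {f \<in> Tpart X n P. \<forall>i\<in>{1..n}. f ` X \<inter> P i \<noteq> {}}"

definition fbar :: "nat \<Rightarrow> (nat \<Rightarrow> 'a set) \<Rightarrow> ('a \<Rightarrow> 'a) \<Rightarrow> nat \<Rightarrow> nat" where
  "fbar n P f i = (THE j. j \<in> {1..n} \<and> f ` P i \<subseteq> P j)"

text \<open>Distinct block sizes l_1 < ... < l_r (indexed from 1) and r.\<close>
definition bsizes :: "nat \<Rightarrow> (nat \<Rightarrow> 'a set) \<Rightarrow> nat set" where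
  "bsizes n P = (\<lambda>i. card (P i)) ` {1..n}"

definition lsize :: "nat \<Rightarrow> (nat \<Rightarrow> 'a set) \<Rightarrow> nat \<Rightarrow> nat" where
  "lsize n P i = sorted_list_of_set (bsizes n P) ! (i - 1)"

definition rnum :: "nat \<Rightarrow> (nat \<Rightarrow> 'a set) \<Rightarrow> nat" where
  "rnum n P = card (bsizes n P)"

definition Bpart_i :: "'a set \<Rightarrow> nat \<Rightarrow> (nat \<Rightarrow> 'a set) \<Rightarrow> nat \<Rightarrow> ('a \<Rightarrow> 'a) set" where
  "Bpart_i X n P i = {f \<in> Sigmapart X n P.
     \<exists>j\<in>{1..n}. \<exists>j'\<in>{1..n}. \<exists>k\<in>{1..n}. \<exists>k'\<in>{1..n}.
       card (P j) = lsize n P i \<and> card (P j') = lsize n P i \<and>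
       card (P k) = lsize n P (i + 1) \<and> card (P k') = lsize n P (i + 1) \<and>
       inj_on f (P j) \<and> f ` P j \<subseteq> P k \<and>
       f ` P k' = P j' \<and>
       (\<forall>m\<in>{1..n} - {j, k'}. \<exists>m'\<in>{1..n}. bij_betw f (P m) (P m') \<and> card (P m') = card (P m))}"

definition Bpart :: "'a set \<Rightarrow> nat \<Rightarrow> (nat \<Rightarrow> 'a set) \<Rightarrow> ('a \<Rightarrow> 'a) set" where
  "Bpart X n P = (\<Union>i\<in>{1..rnum n P - 1}. Bpart_i X n P i)"

inductive_set gensemi :: "('a \<Rightarrow> 'a) set \<Rightarrow> ('a \<Rightarrow> 'a) set" for A where
  base: "f \<in> A \<Longrightarrow> f \<in> gensemi A"
| comp: "f \<in> gensemi A \<Longrightarrow> g \<in> gensemi A \<Longrightarrow> g \<circ> f \<in> gensemi A"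

definition companion :: "'a set \<Rightarrow> nat \<Rightarrow> (nat \<Rightarrow> 'a set) \<Rightarrow> (nat \<Rightarrow> nat) \<Rightarrow> ('a \<Rightarrow> 'a) \<Rightarrow> bool" where
  "companion X n P \<pi> g \<longleftrightarrow> g \<in> Sigmapart X n P \<and>
     (\<forall>i\<in>{1..n}. fbar n P g i = \<pi> i) \<and>
     (\<forall>i\<in>{1..n}. (card (P i) \<le> card (P (\<pi> i)) \<longrightarrow> inj_on g (P i)) \<and>
                 (card (P (\<pi> i)) \<le> card (P i) \<longrightarrow> g ` P i = P (\<pi> i)))"

end

theory Submission
  imports Defs
begin

definition swp :: "nat \<Rightarrow> nat \<Rightarrow> nat \<Rightarrow> nat" where
  "swp b c x = (if x = b then c else if x = c then b else x)"

lemma consec: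
  fixes n :: nat and P :: "nat \<Rightarrow> 'a set"
  assumes s: "s \<in> bsizes n P" and t: "t \<in> bsizes n P" and st: "s < t"
    and mx: "\<forall>u\<in>bsizes n P. u < t \<longrightarrow> u \<le> s"
  shows "\<exists>i\<in>{1..rnum n P - 1}. lsize n P i = s \<and> lsize n P (i+1) = t"
proof -
  define L where "L = sorted_list_of_set (bsizes n P)"
  have fin: "finite (bsizes n P)" unfolding bsizes_def by simp
  have setL: "set L = bsizes n P" using fin L_def by simp
  have srt: "sorted_wrt (<) L" unfolding L_def by (rule strict_sorted_list_of_set)
  have lenL: "length L = rnum n P" unfolding L_def rnum_def using fin by simp
  obtain i0 where i0: "i0 < length L" "L ! i0 = s" using s setL by (metis in_set_conv_nth)
  obtain j0 where j0: "j0 < length L" "L ! j0 = t" using t setL by (metis in_set_conv_nth)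
  have "i0 < j0"
  proof (rule ccontr)
    assume "\<not> i0 < j0"
    then have "j0 = i0 \<or> j0 < i0" by auto
    then show False
    proof
      assume "j0 = i0" then show False using i0 j0 st by simp
    next
      assume "j0 < i0" then have "L ! j0 < L ! i0" using sorted_wrt_nth_less[OF srt _ i0(1)] by simp
      then show False using i0 j0 st by simp
    qed
  qed
  have "j0 = Suc i0"
  proof (rule ccontr)
    assume "j0 \<noteq> Suc i0"
    then have lt: "Suc i0 < j0" using \<open>i0 < j0\<close> by simp
    have a: "L ! i0 < L ! Suc i0" using sorted_wrt_nth_less[OF srt _] lt j0(1) by simp
    have b: "L ! Suc i0 < L ! j0" using sorted_wrt_nth_less[OF srt lt j0(1)] .
    have "L ! Suc i0 \<in> bsizes n P" using setL lt j0(1) by (metis nth_mem order.strict_trans)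
    then show False using mx a b i0 j0 by force
  qed
  show ?thesis
    apply (rule bexI[of _ "Suc i0"])
    using i0 j0 \<open>j0 = Suc i0\<close> lenL unfolding lsize_def L_def[symmetric] by auto
qed

locale partsetup =
  fixes X :: "'a set" and n :: nat and P :: "nat \<Rightarrow> 'a set" and e :: "nat \<Rightarrow> nat \<Rightarrow> 'a"
  assumes fin: "finite X"
  and ne: "\<forall>i\<in>{1..n}. P i \<noteq> {}"
  and disj: "\<forall>i\<in>{1..n}. \<forall>j\<in>{1..n}. i \<noteq> j \<longrightarrow> P i \<inter> P j = {}"
  and un: "(\<Union>i\<in>{1..n}. P i) = X"
  and eb: "\<forall>i\<in>{1..n}. bij_betw (e i) {0..<card (P i)} (P i)"
begin

lemma PX: "a \<in> {1..n} \<Longrightarrow> P a \<subseteq> X" using un by blast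
lemma finP: "a \<in> {1..n} \<Longrightarrow> finite (P a)" using PX fin finite_subset by blast
lemma cardP: "a \<in> {1..n} \<Longrightarrow> 1 \<le> card (P a)"
  using finP ne by (simp add: Suc_le_eq card_gt_0_iff)

definition blk where "blk x = (THE a. a \<in> {1..n} \<and> x \<in> P a)"

lemma blk_eq: "a \<in> {1..n} \<Longrightarrow> x \<in> P a \<Longrightarrow> blk x = a"
  unfolding blk_def apply (rule the_equality) apply simp using disj by (metis IntI atLeastAtMost_iff empty_iff)

lemma blk: "x \<in> X \<Longrightarrow> blk x \<in> {1..n} \<and> x \<in> P (blk x)"
proof -
  assume "x \<in> X"
  then obtain a where "a \<in> {1..n}" "x \<in> P a" using un by blast
  then show ?thesis using blk_eq by simp
qed

lemma e_in: "a \<in> {1..n} \<Longrightarrow> k < card (P a) \<Longrightarrow> e a k \<in> P a"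
proof -
  assume a: "a \<in> {1..n}" and k: "k < card (P a)"
  have "bij_betw (e a) {0..<card (P a)} (P a)" using eb a by auto
  then show ?thesis using k bij_betwE by fastforce
qed

definition idx where "idx x = (THE k. k < card (P (blk x)) \<and> e (blk x) k = x)"

lemma idx_eq: assumes a: "a \<in> {1..n}" and k: "k < card (P a)"
  shows "idx (e a k) = k \<and> blk (e a k) = a"
proof -
  have bij: "bij_betw (e a) {0..<card (P a)} (P a)" using eb a by auto
  have bl: "blk (e a k) = a" using blk_eq a e_in[OF a k] by simp
  have "idx (e a k) = k" unfolding idx_def bl
    apply (rule the_equality) using k apply simp
    using bij k by (auto simp: bij_betw_def inj_on_def)
  with bl show ?thesis by simp
qed

lemma idx: assumes x: "x \<in> X" shows "idx x < card (P (blk x)) \<and> e (blk x) (idx x) = x"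
proof -
  have a: "blk x \<in> {1..n}" "x \<in> P (blk x)" using blk x by auto
  have bij: "bij_betw (e (blk x)) {0..<card (P (blk x))} (P (blk x))" using eb a by auto
  then obtain k where k: "k < card (P (blk x))" "e (blk x) k = x" using a(2)
    by (metis atLeastLessThan_iff bij_betw_imp_surj_on imageE)
  then have "idx x = k" using idx_eq[OF a(1) k(1)] by simp
  with k show ?thesis by simp
qed

lemma decomp: assumes "x \<in> X" obtains a k where "a \<in> {1..n}" "k < card (P a)" "x = e a k"
  using idx[OF assms] blk[OF assms] by metis

lemma decompP: assumes "a \<in> {1..n}" "x \<in> P a" obtains k where "k < card (P a)" "x = e a k"
proof -
  have "x \<in> X" using assms PX by blast
  then show ?thesis using that idx blk_eq assms by metis
qed

definition E where
  "E \<pi> x = (if x \<in> X then e (\<pi> (blk x)) (min (idx x) (card (P (\<pi> (blk x))) - 1)) else x)"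

definition perm where "perm \<pi> \<longleftrightarrow> bij_betw \<pi> {1..n} {1..n}"

lemma E_e: assumes "a \<in> {1..n}" "k < card (P a)"
  shows "E \<pi> (e a k) = e (\<pi> a) (min k (card (P (\<pi> a)) - 1))"
  using idx_eq[OF assms] e_in[OF assms] PX[OF assms(1)] unfolding E_def by auto

lemma E_out: "x \<notin> X \<Longrightarrow> E \<pi> x = x" unfolding E_def by simp

lemma E_cong: "\<forall>a\<in>{1..n}. \<pi> a = \<sigma> a \<Longrightarrow> E \<pi> = E \<sigma>"
  unfolding E_def fun_eq_iff using blk by auto

lemma E_id: "E id = id"
proof (rule ext)
  fix x show "E id x = id x"
  proof (cases "x \<in> X")
    case True
    then obtain a k where "a \<in> {1..n}" "k < card (P a)" "x = e a k" by (rule decomp)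
    then show ?thesis using E_e by simp
  qed (simp add: E_out)
qed

lemma E_comp:
  assumes s: "\<forall>a\<in>{1..n}. \<sigma> a \<in> {1..n}"
    and c: "\<forall>a\<in>{1..n}. min (card (P a)) (card (P (\<tau> (\<sigma> a)))) \<le> card (P (\<sigma> a))"
  shows "E \<tau> \<circ> E \<sigma> = E (\<tau> \<circ> \<sigma>)"
proof (rule ext)
  fix x show "(E \<tau> \<circ> E \<sigma>) x = E (\<tau> \<circ> \<sigma>) x"
  proof (cases "x \<in> X")
    case True
    then obtain a k where a: "a \<in> {1..n}" and k: "k < card (P a)" and x: "x = e a k" by (rule decomp)
    have sa: "\<sigma> a \<in> {1..n}" using s a by auto
    have k': "min k (card (P (\<sigma> a)) - 1) < card (P (\<sigma> a))" using cardP[OF sa] by simp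
    have 1: "E \<sigma> x = e (\<sigma> a) (min k (card (P (\<sigma> a)) - 1))" using E_e[OF a k] x by simp
    have 2: "E \<tau> (E \<sigma> x) = e (\<tau> (\<sigma> a)) (min (min k (card (P (\<sigma> a)) - 1)) (card (P (\<tau> (\<sigma> a))) - 1))"
      using 1 E_e[OF sa k'] by simp
    have 3: "E (\<tau> \<circ> \<sigma>) x = e (\<tau> (\<sigma> a)) (min k (card (P (\<tau> (\<sigma> a))) - 1))"
      using E_e[OF a k] x by simp
    have "min (min k (card (P (\<sigma> a)) - 1)) (card (P (\<tau> (\<sigma> a))) - 1) = min k (card (P (\<tau> (\<sigma> a))) - 1)"
    proof -
      have "min (card (P a)) (card (P (\<tau> (\<sigma> a)))) \<le> card (P (\<sigma> a))" using c a by blast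
      then show ?thesis using k by (simp add: min_def split: if_splits; linarith)
    qed
    then show ?thesis using 2 3 by simp
  qed (simp add: E_out)
qed

lemma E_P: assumes a: "a \<in> {1..n}" and pa: "\<pi> a \<in> {1..n}" and x: "x \<in> P a"
  shows "E \<pi> x \<in> P (\<pi> a)"
proof -
  obtain k where k: "k < card (P a)" "x = e a k" using decompP[OF a x] .
  show ?thesis using E_e[OF a k(1)] k(2) e_in[OF pa] cardP[OF pa] by simp
qed


lemma perm_in: "perm \<pi> \<Longrightarrow> a \<in> {1..n} \<Longrightarrow> \<pi> a \<in> {1..n}"
  unfolding perm_def bij_betw_def by auto

lemma perm_surj: "perm \<pi> \<Longrightarrow> \<pi> ` {1..n} = {1..n}"
  unfolding perm_def bij_betw_def by auto

lemma E_inj: assumes a: "a \<in> {1..n}" and pa: "\<pi> a \<in> {1..n}" and c: "card (P a) \<le> card (P (\<pi> a))"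
  shows "inj_on (E \<pi>) (P a)"
proof (rule inj_onI)
  fix x y assume x: "x \<in> P a" and y: "y \<in> P a" and eq: "E \<pi> x = E \<pi> y"
  obtain k where k: "k < card (P a)" "x = e a k" using decompP[OF a x] .
  obtain l where l: "l < card (P a)" "y = e a l" using decompP[OF a y] .
  have "E \<pi> x = e (\<pi> a) k" using E_e[OF a k(1)] k c by simp
  moreover have "E \<pi> y = e (\<pi> a) l" using E_e[OF a l(1)] l c by simp
  moreover have "inj_on (e (\<pi> a)) {0..<card (P (\<pi> a))}" using eb pa by (auto simp: bij_betw_def)
  ultimately have "k = l" using eq k l c by (auto simp: inj_on_def)
  then show "x = y" using k l by simp
qed

lemma E_onto: assumes a: "a \<in> {1..n}" and pa: "\<pi> a \<in> {1..n}" and c: "card (P (\<pi> a)) \<le> card (P a)"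
  shows "E \<pi> ` P a = P (\<pi> a)"
proof
  show "E \<pi> ` P a \<subseteq> P (\<pi> a)" using E_P[where \<pi>=\<pi>, OF a pa] by blast
  show "P (\<pi> a) \<subseteq> E \<pi> ` P a"
  proof
    fix y assume y: "y \<in> P (\<pi> a)"
    obtain j where j: "j < card (P (\<pi> a))" "y = e (\<pi> a) j" using decompP[OF pa y] .
    have ja: "j < card (P a)" using j c by simp
    have "E \<pi> (e a j) = y" using E_e[OF a ja] j by simp
    moreover have "e a j \<in> P a" using e_in[OF a ja] .
    ultimately show "y \<in> E \<pi> ` P a" by blast
  qed
qed

lemma E_Tpart: assumes p: "perm \<pi>" shows "E \<pi> \<in> Tpart X n P"
proof -
  have 1: "\<forall>x\<in>X. E \<pi> x \<in> X"
  proof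
    fix x assume "x \<in> X"
    then obtain a k where a: "a \<in> {1..n}" "k < card (P a)" "x = e a k" by (rule decomp)
    then have "x \<in> P a" using e_in by simp
    then show "E \<pi> x \<in> X" using E_P[where \<pi>=\<pi>, OF a(1) perm_in[OF p a(1)]] PX[OF perm_in[OF p a(1)]] by blast
  qed
  have 2: "\<forall>i\<in>{1..n}. \<exists>j\<in>{1..n}. E \<pi> ` P i \<subseteq> P j"
    using E_P perm_in[OF p] by blast
  show ?thesis unfolding Tpart_def using 1 2 E_out by blast
qed

lemma E_Sigma: assumes p: "perm \<pi>" shows "E \<pi> \<in> Sigmapart X n P"
proof -
  have "\<forall>i\<in>{1..n}. E \<pi> ` X \<inter> P i \<noteq> {}"
  proof
    fix i assume i: "i \<in> {1..n}"
    then obtain a where a: "a \<in> {1..n}" "\<pi> a = i" using perm_surj[OF p] by (metis imageE)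
    obtain x where x: "x \<in> P a" using ne a by blast
    have "E \<pi> x \<in> P i" using E_P[where \<pi>=\<pi>, OF a(1) perm_in[OF p a(1)] x] a by simp
    moreover have "x \<in> X" using x PX a by blast
    ultimately show "E \<pi> ` X \<inter> P i \<noteq> {}" by blast
  qed
  then show ?thesis unfolding Sigmapart_def using E_Tpart[OF p] by blast
qed

lemma fbar_eq: assumes a: "a \<in> {1..n}" and j: "j \<in> {1..n}" and sub: "g ` P a \<subseteq> P j"
  shows "fbar n P g a = j"
  unfolding fbar_def
proof (rule the_equality)
  show "j \<in> {1..n} \<and> g ` P a \<subseteq> P j" using j sub by simp
  fix j' assume h: "j' \<in> {1..n} \<and> g ` P a \<subseteq> P j'"
  obtain x where x: "x \<in> P a" using ne a by blast
  have "g x \<in> P j \<inter> P j'" using x sub h by blast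
  then show "j' = j" using disj h j by blast
qed

lemma E_companion: assumes p: "perm \<pi>" shows "companion X n P \<pi> (E \<pi>)"
proof -
  have fb: "\<forall>i\<in>{1..n}. fbar n P (E \<pi>) i = \<pi> i"
    using fbar_eq E_P perm_in[OF p] by (meson image_subsetI)
  show ?thesis unfolding companion_def
    using E_Sigma[OF p] fb E_inj E_onto perm_in[OF p] by blast
qed


lemma E_Spart: assumes p: "perm \<pi>" and eqc: "\<forall>a\<in>{1..n}. card (P (\<pi> a)) = card (P a)"
  shows "E \<pi> \<in> Spart X n P"
proof -
  define \<sigma> where "\<sigma> = inv_into {1..n} \<pi>"
  have ps: "perm \<sigma>" using p unfolding perm_def \<sigma>_def by (rule bij_betw_inv_into)
  have inj: "inj_on \<pi> {1..n}" using p unfolding perm_def bij_betw_def by simp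
  have s1: "\<And>a. a \<in> {1..n} \<Longrightarrow> \<pi> (\<sigma> a) = a"
    unfolding \<sigma>_def using perm_surj[OF p] by (metis f_inv_into_f)
  have s2: "\<And>a. a \<in> {1..n} \<Longrightarrow> \<sigma> (\<pi> a) = a"
    unfolding \<sigma>_def using inj by (simp add: inv_into_f_f)
  have c1: "E \<sigma> \<circ> E \<pi> = E (\<sigma> \<circ> \<pi>)"
    apply (rule E_comp) using perm_in[OF p] s2 eqc by auto
  have c2: "E \<pi> \<circ> E \<sigma> = E (\<pi> \<circ> \<sigma>)"
    apply (rule E_comp) using perm_in[OF ps] s1 eqc by (metis min.cobounded2)+
  have "E (\<sigma> \<circ> \<pi>) = E id" by (rule E_cong) (simp add: s2)
  moreover have "E (\<pi> \<circ> \<sigma>) = E id" by (rule E_cong) (simp add: s1)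
  ultimately have "E \<sigma> \<circ> E \<pi> = id \<and> E \<pi> \<circ> E \<sigma> = id" using c1 c2 E_id by simp
  then show ?thesis unfolding Spart_def using E_Tpart[OF p] E_Tpart[OF ps] by blast
qed

lemma perm_swp: assumes "b \<in> {1..n}" "c \<in> {1..n}" shows "perm (swp b c)"
  unfolding perm_def
proof (rule bij_betw_imageI)
  show "inj_on (swp b c) {1..n}" by (auto simp: swp_def inj_on_def)
  show "swp b c ` {1..n} = {1..n}"
  proof
    show "swp b c ` {1..n} \<subseteq> {1..n}" using assms by (auto simp: swp_def)
    show "{1..n} \<subseteq> swp b c ` {1..n}"
    proof
      fix x assume x: "x \<in> {1..n}"
      have "swp b c (swp b c x) = x" by (auto simp: swp_def)
      moreover have "swp b c x \<in> {1..n}" using assms x by (auto simp: swp_def)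
      ultimately show "x \<in> swp b c ` {1..n}" by (metis imageI)
    qed
  qed
qed

lemma E_Bpart: assumes b: "b \<in> {1..n}" and c: "c \<in> {1..n}" and i: "i \<in> {1..rnum n P - 1}"
  and cc: "card (P c) = lsize n P i" and cb: "card (P b) = lsize n P (i+1)"
  and lt: "card (P c) < card (P b)"
  shows "E (swp b c) \<in> Bpart X n P"
proof -
  define \<tau> where "\<tau> = swp b c"
  have bc: "b \<noteq> c" using lt by auto
  have tc: "\<tau> c = b" and tb: "\<tau> b = c" unfolding \<tau>_def swp_def using bc by auto
  have to: "\<And>m. m \<noteq> b \<Longrightarrow> m \<noteq> c \<Longrightarrow> \<tau> m = m" unfolding \<tau>_def swp_def by auto
  have p: "perm \<tau>" unfolding \<tau>_def using perm_swp b c .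
  have 1: "inj_on (E \<tau>) (P c)" using E_inj[where \<pi>=\<tau>, OF c] tc b lt by simp
  have 2: "E \<tau> ` P c \<subseteq> P b" using E_P[where \<pi>=\<tau>, OF c] tc b by auto
  have 3: "E \<tau> ` P b = P c" using E_onto[where \<pi>=\<tau>, OF b] tb c lt by simp
  have 4: "\<forall>m\<in>{1..n} - {c, b}. \<exists>m'\<in>{1..n}. bij_betw (E \<tau>) (P m) (P m') \<and> card (P m') = card (P m)"
  proof
    fix m assume m: "m \<in> {1..n} - {c, b}"
    then have tm: "\<tau> m = m" using to by auto
    have "m \<in> {1..n}" using m by simp
    then have "bij_betw (E \<tau>) (P m) (P m)"
      unfolding bij_betw_def using E_inj[where \<pi>=\<tau>] E_onto[where \<pi>=\<tau>] tm by simp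
    then show "\<exists>m'\<in>{1..n}. bij_betw (E \<tau>) (P m) (P m') \<and> card (P m') = card (P m)"
      using \<open>m \<in> {1..n}\<close> by blast
  qed
  have "E \<tau> \<in> Bpart_i X n P i"
    unfolding Bpart_i_def using E_Sigma[OF p] 1 2 3 4 b c cc cb by blast
  then show ?thesis unfolding Bpart_def \<tau>_def using i by blast
qed


lemma sqdiff: "((y::int) - x)^2 + (z - w)^2 - ((z - x)^2 + (y - w)^2) = 2 * (x - w) * (z - y)"
  by (simp add: power2_eq_square algebra_simps)

definition Phi where "Phi \<pi> = (\<Sum>a\<in>{1..n}. (int (card (P (\<pi> a))) - int (card (P a)))^2)"

lemma main: "perm \<pi> \<Longrightarrow> E \<pi> \<in> gensemi (Spart X n P \<union> Bpart X n P)"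
proof (induction "nat (Phi \<pi>)" arbitrary: \<pi> rule: less_induct)
  case less
  note p = less.prems
  show ?case
  proof (cases "\<forall>a\<in>{1..n}. card (P (\<pi> a)) = card (P a)")
    case True then show ?thesis using E_Spart[OF p] gensemi.base by blast
  next
    case False
    have sumeq: "(\<Sum>a\<in>{1..n}. card (P (\<pi> a))) = (\<Sum>a\<in>{1..n}. card (P a))"
      using sum.reindex_bij_betw[OF p[unfolded perm_def], of "\<lambda>a. card (P a)"] by simp
    have "\<exists>b\<in>{1..n}. card (P (\<pi> b)) < card (P b)"
    proof (rule ccontr)
      assume "\<not> (\<exists>b\<in>{1..n}. card (P (\<pi> b)) < card (P b))"
      then have ge: "\<forall>a\<in>{1..n}. card (P a) \<le> card (P (\<pi> a))" by auto
      from False obtain a where "a \<in> {1..n}" "card (P (\<pi> a)) \<noteq> card (P a)" by blast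
      then have "\<exists>a\<in>{1..n}. card (P a) < card (P (\<pi> a))" using ge by (metis le_neq_implies_less)
      then have "(\<Sum>a\<in>{1..n}. card (P a)) < (\<Sum>a\<in>{1..n}. card (P (\<pi> a)))"
        using sum_strict_mono_ex1[OF _ ge] by simp
      then show False using sumeq by simp
    qed
    define D where "D = {a\<in>{1..n}. card (P (\<pi> a)) < card (P a)}"
    obtain b0 where "b0 \<in> {1..n}" "card (P (\<pi> b0)) < card (P b0)"
      using \<open>\<exists>b\<in>{1..n}. card (P (\<pi> b)) < card (P b)\<close> by blast
    then have "b0 \<in> D" unfolding D_def by simp
    then have "\<exists>m. \<exists>d\<in>D. card (P d) = m" by blast
    define m where "m = (LEAST m. \<exists>d\<in>D. card (P d) = m)"
    obtain b where bD: "b \<in> D" and bm: "card (P b) = m"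
    proof -
      have "\<exists>d\<in>D. card (P d) = m" unfolding m_def by (rule LeastI_ex) fact
      then show ?thesis using that by blast
    qed
    have bmin: "\<forall>d\<in>D. card (P b) \<le> card (P d)"
    proof
      fix d assume "d \<in> D"
      then have "\<exists>d'\<in>D. card (P d') = card (P d)" by blast
      then show "card (P b) \<le> card (P d)" unfolding bm m_def by (rule Least_le)
    qed
    have b: "b \<in> {1..n}" and bdown: "card (P (\<pi> b)) < card (P b)" using bD unfolding D_def by auto
    have pb: "\<pi> b \<in> {1..n}" using perm_in[OF p b] .
    define S where "S = {card (P a) | a. a \<in> {1..n} \<and> card (P a) < card (P b)}"
    have finS: "finite S" unfolding S_def by simp
    have "card (P (\<pi> b)) \<in> S" unfolding S_def using pb bdown by blast
    then have neS: "S \<noteq> {}" by blast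
    define s where "s = Max S"
    have "s \<in> S" unfolding s_def using finS neS by simp
    then obtain c0 where c0: "c0 \<in> {1..n}" "card (P c0) = s" and slt: "s < card (P b)"
      unfolding S_def by blast
    have smax: "\<forall>a\<in>{1..n}. card (P a) < card (P b) \<longrightarrow> card (P a) \<le> s"
    proof (intro ballI impI)
      fix a assume "a \<in> {1..n}" "card (P a) < card (P b)"
      then have "card (P a) \<in> S" unfolding S_def by blast
      then show "card (P a) \<le> s" unfolding s_def using finS by simp
    qed
    have Tb: "card (P (\<pi> b)) \<le> s" using smax pb bdown by blast
    have "\<exists>c\<in>{1..n}. card (P c) = s \<and> card (P (\<pi> b)) < card (P (\<pi> c))"
    proof (rule ccontr)
      assume neg: "\<not> (\<exists>c\<in>{1..n}. card (P c) = s \<and> card (P (\<pi> b)) < card (P (\<pi> c)))"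
      define C where "C = {a\<in>{1..n}. card (P a) = s}"
      have up: "\<forall>c\<in>C. s \<le> card (P (\<pi> c))"
      proof
        fix c assume "c \<in> C"
        then have "c \<in> {1..n}" "card (P c) = s" unfolding C_def by auto
        then have "c \<notin> D"
        proof -
          have "c \<in> D \<Longrightarrow> False"
          proof -
            assume "c \<in> D" then have "card (P b) \<le> card (P c)" using bmin by blast
            then show False using slt \<open>card (P c) = s\<close> by simp
          qed
          then show ?thesis by blast
        qed
        then show "s \<le> card (P (\<pi> c))" using \<open>c \<in> {1..n}\<close> \<open>card (P c) = s\<close> D_def by auto
      qed
      have "c0 \<in> C" using c0 C_def by simp
      have s1: "s \<le> card (P (\<pi> c0))" using up \<open>c0 \<in> C\<close> by blast
      have s2: "\<not> card (P (\<pi> b)) < card (P (\<pi> c0))" using neg c0 by blast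
      have Tbs: "card (P (\<pi> b)) = s" using Tb s1 s2 by simp
      have allc: "\<forall>c\<in>C. card (P (\<pi> c)) = s"
      proof
        fix c assume cC: "c \<in> C"
        then have cn: "c \<in> {1..n}" and cs: "card (P c) = s" unfolding C_def by auto
        have "s \<le> card (P (\<pi> c))" using up cC by blast
        moreover have "\<not> card (P (\<pi> b)) < card (P (\<pi> c))" using neg cn cs by blast
        ultimately show "card (P (\<pi> c)) = s" using Tbs by simp
      qed
      have sub: "\<pi> ` (insert b C) \<subseteq> C"
      proof (rule image_subsetI)
        fix a assume a: "a \<in> insert b C"
        show "\<pi> a \<in> C"
        proof (cases "a = b")
          case True then show ?thesis using Tbs pb unfolding C_def by simp
        next
          case False then have aC: "a \<in> C" using a by simp
          then have "a \<in> {1..n}" unfolding C_def by simp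
          then have "\<pi> a \<in> {1..n}" using perm_in[OF p] by simp
          then show ?thesis using allc aC unfolding C_def by simp
        qed
      qed
      have "insert b C \<subseteq> {1..n}" using b unfolding C_def by blast
      moreover have "inj_on \<pi> {1..n}" using p unfolding perm_def bij_betw_def by simp
      ultimately have injb: "inj_on \<pi> (insert b C)" using inj_on_subset by blast
      have finC: "finite C" unfolding C_def by simp
      have "card (insert b C) \<le> card C" using card_inj_on_le[OF injb sub finC] .
      moreover have "b \<notin> C" using slt C_def by auto
      ultimately show False using finC by simp
    qed
    then obtain c where c: "c \<in> {1..n}" "card (P c) = s" and Tc: "card (P (\<pi> b)) < card (P (\<pi> c))"
      by blast
    have bc: "b \<noteq> c" using c slt by auto
    define \<tau> where "\<tau> = swp b c"
    define \<rho> where "\<rho> = \<pi> \<circ> \<tau>"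
    have tc: "\<tau> c = b" and tb: "\<tau> b = c" unfolding \<tau>_def swp_def using bc by auto
    have to: "\<And>m. m \<noteq> b \<Longrightarrow> m \<noteq> c \<Longrightarrow> \<tau> m = m" unfolding \<tau>_def swp_def by auto
    have tt: "\<And>a. \<tau> (\<tau> a) = a" unfolding \<tau>_def swp_def by auto
    have pt: "perm \<tau>" unfolding \<tau>_def using perm_swp b c(1) .
    have pr: "perm \<rho>" unfolding \<rho>_def using pt p unfolding perm_def by (rule bij_betw_trans)
    have comp: "E \<rho> \<circ> E \<tau> = E (\<rho> \<circ> \<tau>)"
    proof (rule E_comp)
      show "\<forall>a\<in>{1..n}. \<tau> a \<in> {1..n}" using perm_in[OF pt] by blast
      show "\<forall>a\<in>{1..n}. min (card (P a)) (card (P (\<rho> (\<tau> a)))) \<le> card (P (\<tau> a))"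
      proof
        fix a assume "a \<in> {1..n}"
        have r: "\<rho> (\<tau> a) = \<pi> a" unfolding \<rho>_def using tt by simp
        show "min (card (P a)) (card (P (\<rho> (\<tau> a)))) \<le> card (P (\<tau> a))"
        proof (cases "a = b")
          case True then show ?thesis using r tb c Tb by simp
        next
          case nb: False
          show ?thesis
          proof (cases "a = c")
            case True then show ?thesis using tc c slt by simp
          next
            case False then show ?thesis using to nb by simp
          qed
        qed
      qed
    qed
    have "E (\<rho> \<circ> \<tau>) = E \<pi>" by (rule E_cong) (simp add: \<rho>_def tt)
    with comp have Epi: "E \<pi> = E \<rho> \<circ> E \<tau>" by simp
    define f where "f = (\<lambda>a. (int (card (P (\<pi> a))) - int (card (P a)))^2)"
    define g where "g = (\<lambda>a. (int (card (P (\<rho> a))) - int (card (P a)))^2)"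
    have split: "\<And>h :: nat \<Rightarrow> int. sum h {1..n} = h b + h c + sum h ({1..n} - {b} - {c})"
    proof -
      fix h :: "nat \<Rightarrow> int"
      have "sum h {1..n} = h b + sum h ({1..n} - {b})" using b by (simp add: sum.remove)
      moreover have "sum h ({1..n} - {b}) = h c + sum h ({1..n} - {b} - {c})"
        using c bc by (simp add: sum.remove)
      ultimately show "sum h {1..n} = h b + h c + sum h ({1..n} - {b} - {c})" by simp
    qed
    have rest: "sum g ({1..n} - {b} - {c}) = sum f ({1..n} - {b} - {c})"
      by (rule sum.cong) (auto simp: f_def g_def \<rho>_def to)
    have gb: "g b = (int (card (P (\<pi> c))) - int (card (P b)))^2" unfolding g_def \<rho>_def using tb by simp
    have gc: "g c = (int (card (P (\<pi> b))) - int s)^2" unfolding g_def \<rho>_def using tc c by simp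
    have fb: "f b = (int (card (P (\<pi> b))) - int (card (P b)))^2" unfolding f_def by simp
    have fc: "f c = (int (card (P (\<pi> c))) - int s)^2" unfolding f_def using c by simp
    have key: "f b + f c - (g b + g c) = 2 * (int (card (P b)) - int s) * (int (card (P (\<pi> c))) - int (card (P (\<pi> b))))"
      unfolding fb fc gb gc by (rule sqdiff)
    have pos: "0 < 2 * (int (card (P b)) - int s) * (int (card (P (\<pi> c))) - int (card (P (\<pi> b))))"
      using slt Tc by simp
    have "Phi \<rho> < Phi \<pi>"
      unfolding Phi_def f_def[symmetric] g_def[symmetric] using split[of f] split[of g] rest key pos by simp
    moreover have "0 \<le> Phi \<rho>" unfolding Phi_def by (simp add: sum_nonneg)
    ultimately have "nat (Phi \<rho>) < nat (Phi \<pi>)" by simp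
    then have IH: "E \<rho> \<in> gensemi (Spart X n P \<union> Bpart X n P)" using less.hyps pr by blast
    have "\<exists>i\<in>{1..rnum n P - 1}. lsize n P i = s \<and> lsize n P (i+1) = card (P b)"
    proof (rule consec)
      show "s \<in> bsizes n P" unfolding bsizes_def using c by auto
      show "card (P b) \<in> bsizes n P" unfolding bsizes_def using b by auto
      show "s < card (P b)" using slt .
      show "\<forall>u\<in>bsizes n P. u < card (P b) \<longrightarrow> u \<le> s" unfolding bsizes_def using smax by auto
    qed
    then obtain i where i: "i \<in> {1..rnum n P - 1}" "lsize n P i = s" "lsize n P (i+1) = card (P b)"
      by blast
    have "E \<tau> \<in> Bpart X n P" unfolding \<tau>_def
      using E_Bpart[OF b c(1) i(1)] i c slt by simp
    then have "E \<tau> \<in> gensemi (Spart X n P \<union> Bpart X n P)" by (simp add: gensemi.base)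
    then show ?thesis using Epi IH gensemi.comp by metis
  qed
qed

end

theorem lemma4p4:
  fixes X :: "'a set" and n :: nat and P :: "nat \<Rightarrow> 'a set" and f :: "'a \<Rightarrow> 'a"
  assumes "finite X" and "X \<noteq> {}"
    and "\<forall>i\<in>{1..n}. P i \<noteq> {}"
    and "\<forall>i\<in>{1..n}. \<forall>j\<in>{1..n}. i \<noteq> j \<longrightarrow> P i \<inter> P j = {}"
    and "(\<Union>i\<in>{1..n}. P i) = X"
    and "\<forall>i. 1 \<le> i \<and> i < n \<longrightarrow> card (P i) \<le> card (P (i + 1))"
    and "f \<in> Sigmapart X n P"
  shows "\<exists>g. companion X n P (fbar n P f) g \<and> g \<in> gensemi (Spart X n P \<union> Bpart X n P)"
proof -
  have finP: "\<forall>i\<in>{1..n}. finite (P i)"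
    using assms(1,5) by (metis UN_upper finite_subset)
  then have "\<forall>i\<in>{1..n}. \<exists>h. bij_betw h {0..<card (P i)} (P i)"
    using ex_bij_betw_nat_finite by blast
  then obtain e where e: "\<forall>i\<in>{1..n}. bij_betw (e i) {0..<card (P i)} (P i)" by metis
  interpret ps: partsetup X n P e
    using assms(1,3,4,5) e by unfold_locales auto
  define \<pi> where "\<pi> = fbar n P f"
  have fT: "f \<in> Tpart X n P" using assms(7) unfolding Sigmapart_def by simp
  have fb: "\<forall>a\<in>{1..n}. \<pi> a \<in> {1..n} \<and> f ` P a \<subseteq> P (\<pi> a)"
  proof
    fix a assume a: "a \<in> {1..n}"
    then obtain j where j: "j \<in> {1..n}" "f ` P a \<subseteq> P j" using fT unfolding Tpart_def by blast
    then have "\<pi> a = j" unfolding \<pi>_def using ps.fbar_eq[OF a j(1) j(2)] by simp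
    then show "\<pi> a \<in> {1..n} \<and> f ` P a \<subseteq> P (\<pi> a)" using j by simp
  qed
  have im: "\<pi> ` {1..n} = {1..n}"
  proof
    show "\<pi> ` {1..n} \<subseteq> {1..n}" using fb by blast
    show "{1..n} \<subseteq> \<pi> ` {1..n}"
    proof
      fix j assume j: "j \<in> {1..n}"
      then have "f ` X \<inter> P j \<noteq> {}" using assms(7) unfolding Sigmapart_def by blast
      then obtain x where x: "x \<in> X" "f x \<in> P j" by blast
      define a where "a = ps.blk x"
      have a: "a \<in> {1..n}" "x \<in> P a" using ps.blk[OF x(1)] a_def by auto
      have "f x \<in> P (\<pi> a)" using fb a by blast
      then have "\<pi> a = j" using assms(4) fb a(1) j x(2) by blast
      then show "j \<in> \<pi> ` {1..n}" using a(1) by blast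
    qed
  qed
  have "inj_on \<pi> {1..n}" using im by (simp add: eq_card_imp_inj_on)
  then have p: "ps.perm \<pi>" unfolding ps.perm_def bij_betw_def using im by simp
  show ?thesis unfolding \<pi>_def[symmetric]
    using ps.E_companion[OF p] ps.main[OF p] by blast
qed

end
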